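(* Let $G=(V,E)$ be the complete undirected graph on $V$ with a self-loop at every vertex, $r:V\to\mathbb{Z}_{\geq1}$, $\hat r=r(V)-|V|+1$, and let $b$ be the function on $2^E$ with $b(F)=|V(F)|-\mathrm{comp}(F)+\hat r$ for $F\neq\emptyset$ and $b(\emptyset)=0$. Let $B=\{x\in\mathbb{Z}_{\geq0}^E: x(E)=r(V),\ (V,\mathrm{supp}(x))\text{ is connected}\}$. Then $B=B(b)\cap\mathbb{Z}_{\geq0}^E$.
   Context: $r(V)=\sum_v r(v)$, $x(F)=\sum_{e\in F}x(e)$, $\mathrm{supp}(x)=\{e:x(e)\neq0\}$. For $F\subseteq E$, $V(F)$ is the set of vertices covered by $F$ and $\mathrm{comp}(F)$ the number of connected components of $(V(F),F)$. The base polymatroid of $b$ is $B(b)=\{x\in\mathbb{R}^E: x(F)\leq b(F)\ \forall F\subseteq E,\ x(E)=b(E)\}$. *)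

theory Defs
  imports Complex_Main
begin

text \<open>Edges of the complete graph on V with a self-loop at every vertex:
  an edge is the set {u,v} (a singleton for a loop).\<close>
definition cedges :: "'a set \<Rightarrow> 'a set set" where
  "cedges V = {{u, v} | u v. u \<in> V \<and> v \<in> V}"

definition verts :: "'a set set \<Rightarrow> 'a set" where
  "verts F = \<Union> F"

definition adj :: "'a set set \<Rightarrow> ('a \<times> 'a) set" where
  "adj F = {(u, v). {u, v} \<in> F}"

definition ncomp :: "'a set set \<Rightarrow> nat" where
  "ncomp F = card (verts F // ((adj F)\<^sup>*))"

definition connected_graph :: "'a set \<Rightarrow> 'a set set \<Rightarrow> bool" where
  "connected_graph W F \<longleftrightarrow> (\<forall>u\<in>W. \<forall>v\<in>W. (u, v) \<in> (adj F)\<^sup>*)"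

definition supp :: "('e \<Rightarrow> real) \<Rightarrow> 'e set \<Rightarrow> 'e set" where
  "supp x E = {e \<in> E. x e \<noteq> 0}"

definition rhat :: "'a set \<Rightarrow> ('a \<Rightarrow> int) \<Rightarrow> int" where
  "rhat V r = sum r V - int (card V) + 1"

definition bfun :: "'a set \<Rightarrow> ('a \<Rightarrow> int) \<Rightarrow> 'a set set \<Rightarrow> real" where
  "bfun V r F = (if F = {} then 0
                 else real (card (verts F)) - real (ncomp F) + real_of_int (rhat V r))"

definition vecs :: "'e set \<Rightarrow> ('e \<Rightarrow> real) set" where
  "vecs E = {x. \<forall>e. e \<notin> E \<longrightarrow> x e = 0}"

definition nonneg_int_vecs :: "'e set \<Rightarrow> ('e \<Rightarrow> real) set" where
  "nonneg_int_vecs E = {x \<in> vecs E. \<forall>e\<in>E. x e \<in> \<int> \<and> x e \<ge> 0}"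

definition base_poly :: "'e set \<Rightarrow> ('e set \<Rightarrow> real) \<Rightarrow> ('e \<Rightarrow> real) set" where
  "base_poly E b = {x \<in> vecs E. (\<forall>F. F \<subseteq> E \<longrightarrow> sum x F \<le> b F) \<and> sum x E = b E}"

end

theory Submission
  imports Defs
begin

lemma adj_sym: "(a,b) \<in> adj F \<Longrightarrow> (b,a) \<in> adj F"
  by (auto simp: adj_def insert_commute)

lemma R_sym: "(a,b) \<in> (adj F)\<^sup>* \<Longrightarrow> (b,a) \<in> (adj F)\<^sup>*"
  by (induct rule: rtrancl_induct) (auto intro: converse_rtrancl_into_rtrancl adj_sym)

lemma R_class: "(a,b) \<in> (adj F)\<^sup>* \<Longrightarrow> (adj F)\<^sup>* `` {a} = (adj F)\<^sup>* `` {b}"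
proof -
  assume ab: "(a,b) \<in> (adj F)\<^sup>*"
  then have ba: "(b,a) \<in> (adj F)\<^sup>*" by (rule R_sym)
  show ?thesis
  proof (intro set_eqI iffI)
    fix y assume "y \<in> (adj F)\<^sup>* `` {a}"
    then have "(a,y) \<in> (adj F)\<^sup>*" by simp
    then show "y \<in> (adj F)\<^sup>* `` {b}" using rtrancl_trans[OF ba] by simp
  next
    fix y assume "y \<in> (adj F)\<^sup>* `` {b}"
    then have "(b,y) \<in> (adj F)\<^sup>*" by simp
    then show "y \<in> (adj F)\<^sup>* `` {a}" using rtrancl_trans[OF ab] by simp
  qed
qed

lemma char:
  assumes "(a,b) \<in> (adj (insert {u,v} F))\<^sup>*"
  shows "(a,b) \<in> (adj F)\<^sup>* \<or> ((a,u) \<in> (adj F)\<^sup>* \<and> (v,b) \<in> (adj F)\<^sup>*)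
         \<or> ((a,v) \<in> (adj F)\<^sup>* \<and> (u,b) \<in> (adj F)\<^sup>*)"
  using assms
proof (induction rule: rtrancl_induct)
  case base then show ?case by simp
next
  case (step y z)
  have "{y,z} = {u,v} \<or> (y,z) \<in> adj F" using step(2) by (auto simp: adj_def)
  then show ?case
  proof
    assume "{y,z} = {u,v}"
    hence "(y = u \<and> z = v) \<or> (y = v \<and> z = u)" by (auto simp: doubleton_eq_iff)
    then show ?thesis
    proof
      assume yz: "y = u \<and> z = v"
      from step(3) show ?thesis
      proof (elim disjE conjE)
        assume "(a,y) \<in> (adj F)\<^sup>*" then show ?thesis using yz by auto
      next
        assume "(a,u) \<in> (adj F)\<^sup>*" "(v,y) \<in> (adj F)\<^sup>*"
        then have "(a,v) \<in> (adj F)\<^sup>*" using yz R_sym[of v u F] rtrancl_trans[of a u "adj F" v] by simp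
        then show ?thesis using yz by auto
      next
        assume "(a,v) \<in> (adj F)\<^sup>*" "(u,y) \<in> (adj F)\<^sup>*"
        then show ?thesis using yz by auto
      qed
    next
      assume yz: "y = v \<and> z = u"
      from step(3) show ?thesis
      proof (elim disjE conjE)
        assume "(a,y) \<in> (adj F)\<^sup>*" then show ?thesis using yz by auto
      next
        assume "(a,u) \<in> (adj F)\<^sup>*" "(v,y) \<in> (adj F)\<^sup>*"
        then show ?thesis using yz by auto
      next
        assume "(a,v) \<in> (adj F)\<^sup>*" "(u,y) \<in> (adj F)\<^sup>*"
        then have "(a,u) \<in> (adj F)\<^sup>*" using yz R_sym[of u v F] rtrancl_trans[of a v "adj F" u] by simp
        then show ?thesis using yz by auto
      qed
    qed
  next
    assume "(y,z) \<in> adj F"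
    then have yz: "(y,z) \<in> (adj F)\<^sup>*" by (rule r_into_rtrancl)
    from step(3) show ?thesis
    proof (elim disjE conjE)
      assume "(a,y) \<in> (adj F)\<^sup>*" then show ?thesis using rtrancl_trans[OF _ yz] by blast
    next
      assume "(a,u) \<in> (adj F)\<^sup>*" "(v,y) \<in> (adj F)\<^sup>*"
      then show ?thesis using rtrancl_trans[OF _ yz] by blast
    next
      assume "(a,v) \<in> (adj F)\<^sup>*" "(u,y) \<in> (adj F)\<^sup>*"
      then show ?thesis using rtrancl_trans[OF _ yz] by blast
    qed
  qed
qed

lemma step_card:
  assumes "finite V"
  shows "card (V // (adj F)\<^sup>*) \<le> card (V // (adj (insert {u,v} F))\<^sup>*) + 1"
proof -
  define R where "R = (adj F)\<^sup>*"
  define R' where "R' = (adj (insert {u,v} F))\<^sup>*"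
  have RR': "R \<subseteq> R'" unfolding R_def R'_def by (rule rtrancl_mono) (auto simp: adj_def)
  have img: "R' `` (R `` {a}) = R' `` {a}" for a
  proof
    show "R' `` (R `` {a}) \<subseteq> R' `` {a}" using RR' unfolding R'_def by (auto intro: rtrancl_trans)
    show "R' `` {a} \<subseteq> R' `` (R `` {a})" unfolding R_def by auto
  qed
  define \<phi> where "\<phi> c = R' `` c" for c
  define X where "X = V // R"
  define A where "A = R `` {u}"
  have finX: "finite X" unfolding X_def quotient_def using assms by auto
  have inj: "inj_on \<phi> (X - {A})"
  proof (rule inj_onI)
    fix c d assume c: "c \<in> X - {A}" and d: "d \<in> X - {A}" and eq: "\<phi> c = \<phi> d"
    obtain a where a: "a \<in> V" "c = R``{a}" using c unfolding X_def quotient_def by auto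
    obtain b where b: "b \<in> V" "d = R``{b}" using d unfolding X_def quotient_def by auto
    have "b \<in> R'``{b}" unfolding R'_def by auto
    hence "b \<in> R'``{a}" using eq img a b unfolding \<phi>_def by metis
    hence "(a,b) \<in> R'" by auto
    from char[OF this[unfolded R'_def]] show "c = d"
    proof (elim disjE conjE)
      assume "(a,b) \<in> (adj F)\<^sup>*" then show ?thesis using a b R_class unfolding R_def by metis
    next
      assume "(a,u) \<in> (adj F)\<^sup>*" then have "c = A" using a R_class unfolding A_def R_def by metis
      then show ?thesis using c by auto
    next
      assume "(u,b) \<in> (adj F)\<^sup>*" then have "d = A" using b R_class unfolding A_def R_def by metis
      then show ?thesis using d by auto
    qed
  qed
  have sub: "\<phi> ` (X - {A}) \<subseteq> V // R'"
  proof
    fix y assume "y \<in> \<phi> ` (X - {A})"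
    then obtain a where "a \<in> V" "y = \<phi> (R``{a})" unfolding X_def quotient_def by auto
    then show "y \<in> V // R'" using img unfolding \<phi>_def by (auto intro: quotientI)
  qed
  have finQ: "finite (V // R')" unfolding quotient_def using assms by auto
  have "card (X - {A}) = card (\<phi> ` (X - {A}))" using inj by (simp add: card_image)
  also have "\<dots> \<le> card (V // R')" using card_mono[OF finQ sub] .
  finally have 1: "card (X - {A}) \<le> card (V // R')" .
  have "card X \<le> card (X - {A}) + 1" using finX
    by (cases "A \<in> X") (auto simp: card_Diff_singleton_if card_gt_0_iff)
  with 1 show ?thesis unfolding X_def R_def R'_def by simp
qed

lemma many_card:
  assumes "finite V" "finite G" "G \<subseteq> cedges V"
  shows "card (V // (adj F)\<^sup>*) \<le> card (V // (adj (F \<union> G))\<^sup>*) + card G"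
  using assms(2,3)
proof (induction G rule: finite_induct)
  case empty then show ?case by simp
next
  case (insert e G)
  obtain u v where e: "e = {u,v}" using insert(4) unfolding cedges_def by auto
  have "card (V // (adj F)\<^sup>*) \<le> card (V // (adj (F \<union> G))\<^sup>*) + card G" using insert by auto
  also have "card (V // (adj (F \<union> G))\<^sup>*) \<le> card (V // (adj (insert {u,v} (F \<union> G)))\<^sup>*) + 1"
    by (rule step_card[OF assms(1)])
  finally show ?case using insert(1,2) e by simp
qed

lemma card_conn:
  assumes "finite V" "\<forall>a\<in>V. \<forall>b\<in>V. (a,b) \<in> (adj H)\<^sup>*"
  shows "card (V // (adj H)\<^sup>*) \<le> 1"
proof -
  have fin: "finite (V // (adj H)\<^sup>*)" unfolding quotient_def using assms by auto
  have "\<forall>x\<in>V // (adj H)\<^sup>*. \<forall>y\<in>V // (adj H)\<^sup>*. x = y"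
  proof (intro ballI)
    fix x y assume "x \<in> V // (adj H)\<^sup>*" "y \<in> V // (adj H)\<^sup>*"
    then obtain a b where "a \<in> V" "b \<in> V" "x = (adj H)\<^sup>* `` {a}" "y = (adj H)\<^sup>* `` {b}"
      by (auto elim!: quotientE)
    then show "x = y" using assms(2) R_class by metis
  qed
  then show ?thesis using card_le_Suc0_iff_eq[OF fin] by simp
qed

lemma count:
  assumes "finite V" "F \<subseteq> cedges V"
  shows "card (V // (adj F)\<^sup>*) + card (verts F) = card V + ncomp F"
proof -
  define R where "R = (adj F)\<^sup>*"
  have vsub: "verts F \<subseteq> V" using assms(2) unfolding verts_def cedges_def by auto
  have iso: "R``{x} = {x}" if "x \<notin> verts F" for x
  proof -
    have "y = x" if "(x,y) \<in> R" for y
      using that unfolding R_def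
    proof (cases rule: converse_rtranclE)
      case (step z)
      then have "x \<in> verts F" unfolding adj_def verts_def by auto
      then show ?thesis using \<open>x \<notin> verts F\<close> by simp
    qed simp
    then show ?thesis unfolding R_def by auto
  qed
  have split: "V // R = verts F // R \<union> (V - verts F) // R"
    unfolding quotient_def using vsub by blast
  have disj: "verts F // R \<inter> (V - verts F) // R = {}"
  proof -
    { fix c assume "c \<in> verts F // R" "c \<in> (V - verts F) // R"
      then obtain a b where "a \<in> verts F" "c = R``{a}" "b \<in> V - verts F" "c = R``{b}"
        unfolding quotient_def by auto
      moreover have "a \<in> R``{a}" unfolding R_def by auto
      ultimately have "a \<in> R``{b}" by metis
      moreover have "R``{b} = {b}" using iso \<open>b \<in> V - verts F\<close> by simp
      ultimately have "a \<in> {b}" by simp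
      then have False using \<open>a \<in> verts F\<close> \<open>b \<in> V - verts F\<close> by simp }
    then show ?thesis by blast
  qed
  have q2: "(V - verts F) // R = (\<lambda>x. {x}) ` (V - verts F)"
    unfolding quotient_def using iso by auto
  have c2: "card ((V - verts F) // R) = card V - card (verts F)"
    unfolding q2 using assms(1) vsub
    by (simp add: card_image card_Diff_subset finite_subset)
  have fin1: "finite (verts F // R)" "finite ((V - verts F) // R)"
    unfolding quotient_def using assms(1) vsub finite_subset by auto
  have "card (V // R) = card (verts F // R) + card ((V - verts F) // R)"
    unfolding split using card_Un_disjoint[OF fin1 disj] .
  moreover have "card (verts F) \<le> card V" using card_mono[OF assms(1) vsub] .
  ultimately have "card (V // R) + card (verts F) = card V + card (verts F // R)" using c2 by arith
  then show ?thesis unfolding ncomp_def R_def .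
qed


lemma cedges_finite: "finite V \<Longrightarrow> finite (cedges V)"
proof -
  assume "finite V"
  have "cedges V = (\<lambda>p. {fst p, snd p}) ` (V \<times> V)" unfolding cedges_def image_def by auto
  then show ?thesis using \<open>finite V\<close> by simp
qed

lemma bform:
  assumes "finite V" "F \<subseteq> cedges V" "F \<noteq> {}"
  shows "bfun V r F = real_of_int (sum r V) + 1 - real (card (V // (adj F)\<^sup>*))"
proof -
  have c: "card (V // (adj F)\<^sup>*) + card (verts F) = card V + ncomp F" using count[OF assms(1,2)] .
  hence "real (card (V // (adj F)\<^sup>*) + card (verts F)) = real (card V + ncomp F)"
    by (rule arg_cong)
  hence "real (card (V // (adj F)\<^sup>*)) + real (card (verts F)) = real (card V) + real (ncomp F)"
    by (simp only: of_nat_add)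
  moreover have "bfun V r F = real (card (verts F)) - real (ncomp F) + (real_of_int (sum r V) - real (card V) + 1)"
    using assms(3) unfolding bfun_def rhat_def by simp
  ultimately show ?thesis by linarith
qed

lemma card_complete:
  assumes "finite V" "V \<noteq> {}"
  shows "card (V // (adj (cedges V))\<^sup>*) = 1"
proof -
  have conn: "\<forall>a\<in>V. \<forall>b\<in>V. (a,b) \<in> (adj (cedges V))\<^sup>*"
  proof (intro ballI)
    fix a b assume "a \<in> V" "b \<in> V"
    then have "{a,b} \<in> cedges V" unfolding cedges_def by blast
    then have "(a,b) \<in> adj (cedges V)" unfolding adj_def by simp
    then show "(a,b) \<in> (adj (cedges V))\<^sup>*" by (rule r_into_rtrancl)
  qed
  have le: "card (V // (adj (cedges V))\<^sup>*) \<le> 1" using card_conn[OF assms(1) conn] .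
  have fin: "finite (V // (adj (cedges V))\<^sup>*)" unfolding quotient_def using assms by auto
  have "V // (adj (cedges V))\<^sup>* \<noteq> {}" using assms(2) unfolding quotient_def by auto
  then have "card (V // (adj (cedges V))\<^sup>*) \<noteq> 0" using fin by simp
  with le show ?thesis by linarith
qed

theorem mainTheorem11:
  fixes V :: "'a set" and r :: "'a \<Rightarrow> int"
  assumes "finite V" and "V \<noteq> {}"
    and "\<forall>v\<in>V. r v \<ge> 1"
  shows "{x \<in> nonneg_int_vecs (cedges V).
            sum x (cedges V) = real_of_int (sum r V)
            \<and> connected_graph V (supp x (cedges V))}
         = base_poly (cedges V) (bfun V r) \<inter> nonneg_int_vecs (cedges V)"
proof -
  define E where "E = cedges V"
  have finE: "finite E" unfolding E_def using cedges_finite[OF assms(1)] .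
  have Ene: "E \<noteq> {}" using assms(2) unfolding E_def cedges_def by auto
  have bE: "bfun V r E = real_of_int (sum r V)"
    using bform[OF assms(1) _ Ene, of r] card_complete[OF assms(1,2)] unfolding E_def by simp
  show ?thesis unfolding E_def[symmetric]
  proof (rule set_eqI, rule iffI)
    fix x assume "x \<in> {x \<in> nonneg_int_vecs E. sum x E = real_of_int (sum r V) \<and> connected_graph V (supp x E)}"
    then have xv: "x \<in> vecs E" and xi: "\<forall>e\<in>E. x e \<in> \<int> \<and> x e \<ge> 0"
      and xs: "sum x E = real_of_int (sum r V)" and xc: "connected_graph V (supp x E)"
      unfolding nonneg_int_vecs_def by auto
    have "sum x F \<le> bfun V r F" if FE: "F \<subseteq> E" for F
    proof (cases "F = {}")
      case True then show ?thesis by (simp add: bfun_def)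
    next
      case False
      define G where "G = supp x E - F"
      have GE: "G \<subseteq> E" unfolding G_def supp_def by auto
      have finG: "finite G" using finite_subset[OF GE finE] .
      have "card (V // (adj F)\<^sup>*) \<le> card (V // (adj (F \<union> G))\<^sup>*) + card G"
        using many_card[OF assms(1) finG GE[unfolded E_def]] .
      moreover have "card (V // (adj (F \<union> G))\<^sup>*) \<le> 1"
      proof (rule card_conn[OF assms(1)])
        have "supp x E \<subseteq> F \<union> G" unfolding G_def by auto
        then have "(adj (supp x E))\<^sup>* \<subseteq> (adj (F \<union> G))\<^sup>*"
          by (intro rtrancl_mono) (auto simp: adj_def)
        then show "\<forall>a\<in>V. \<forall>b\<in>V. (a,b) \<in> (adj (F \<union> G))\<^sup>*"
          using xc unfolding connected_graph_def by blast
      qed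
      ultimately have k: "real (card (V // (adj F)\<^sup>*)) \<le> 1 + real (card G)" by linarith
      have "real (card G) = (\<Sum>e\<in>G. 1)" by simp
      also have "\<dots> \<le> sum x G"
      proof (rule sum_mono)
        fix e assume "e \<in> G"
        then have "e \<in> E" "x e \<noteq> 0" unfolding G_def supp_def by auto
        then have "x e \<in> \<int>" "x e \<ge> 0" "x e \<noteq> 0" using xi by auto
        then obtain n where "x e = of_int n" by (auto elim: Ints_cases)
        with \<open>x e \<ge> 0\<close> \<open>x e \<noteq> 0\<close> have "n \<ge> 1" by simp
        then show "1 \<le> x e" using \<open>x e = of_int n\<close> by simp
      qed
      also have "\<dots> \<le> sum x (E - F)"
        by (rule sum_mono2) (use finE GE xi in \<open>auto simp: G_def\<close>)
      finally have g: "real (card G) \<le> sum x (E - F)" .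
      have "sum x E = sum x (E - F) + sum x F" using sum.subset_diff[OF FE finE] .
      then show ?thesis using bform[OF assms(1) FE[unfolded E_def] False, of r] k g xs by simp
    qed
    then show "x \<in> base_poly E (bfun V r) \<inter> nonneg_int_vecs E"
      using xv xi xs bE unfolding base_poly_def nonneg_int_vecs_def by auto
  next
    fix x assume "x \<in> base_poly E (bfun V r) \<inter> nonneg_int_vecs E"
    then have xv: "x \<in> vecs E" and xi: "\<forall>e\<in>E. x e \<in> \<int> \<and> x e \<ge> 0"
      and xb: "\<forall>F. F \<subseteq> E \<longrightarrow> sum x F \<le> bfun V r F" and xs0: "sum x E = bfun V r E"
      unfolding nonneg_int_vecs_def base_poly_def by auto
    have xs: "sum x E = real_of_int (sum r V)" using xs0 bE by simp
    have "connected_graph V (supp x E)"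
    proof (rule ccontr)
      assume "\<not> connected_graph V (supp x E)"
      then obtain u v where uv: "u \<in> V" "v \<in> V" "(u,v) \<notin> (adj (supp x E))\<^sup>*"
        unfolding connected_graph_def by auto
      define Rs where "Rs = (adj (supp x E))\<^sup>*"
      define S where "S = Rs``{u} \<inter> V"
      define F where "F = cedges S \<union> cedges (V - S)"
      have uS: "u \<in> S" unfolding S_def Rs_def using uv by auto
      have vS: "v \<notin> S" unfolding S_def Rs_def using uv by auto
      have SV: "S \<subseteq> V" unfolding S_def by auto
      have mono: "cedges A \<subseteq> cedges V" if "A \<subseteq> V" for A
        using that unfolding cedges_def by auto
      have FE: "F \<subseteq> E" unfolding F_def E_def using mono[OF SV] mono[of "V - S"] by auto
      have "{u,u} \<in> cedges S" unfolding cedges_def using uS by auto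
      then have Fne: "F \<noteq> {}" unfolding F_def by auto
      have suppF: "supp x E \<subseteq> F"
      proof
        fix e assume e: "e \<in> supp x E"
        then have "e \<in> E" unfolding supp_def by auto
        then obtain a b where ab: "e = {a,b}" "a \<in> V" "b \<in> V" unfolding E_def cedges_def by auto
        have ab1: "(a,b) \<in> adj (supp x E)" "(b,a) \<in> adj (supp x E)"
          using e ab unfolding adj_def by (auto simp: insert_commute)
        show "e \<in> F"
        proof (cases "a \<in> S")
          case True
          then have "(u,a) \<in> Rs" unfolding S_def by auto
          then have "(u,b) \<in> Rs" using ab1 unfolding Rs_def by (meson rtrancl_into_rtrancl)
          then have "b \<in> S" using ab unfolding S_def by auto
          then have "e \<in> cedges S" using True ab unfolding cedges_def by auto
          then show ?thesis unfolding F_def by auto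
        next
          case False
          have "b \<notin> S"
          proof
            assume "b \<in> S"
            then have "(u,b) \<in> Rs" unfolding S_def by auto
            then have "(u,a) \<in> Rs" using ab1 unfolding Rs_def by (meson rtrancl_into_rtrancl)
            then show False using False ab unfolding S_def by auto
          qed
          then have "e \<in> cedges (V - S)" using False ab unfolding cedges_def by auto
          then show ?thesis unfolding F_def by auto
        qed
      qed
      have "sum x E = sum x (E - F) + sum x F" using sum.subset_diff[OF FE finE] .
      moreover have "sum x (E - F) = 0"
        by (rule sum.neutral) (use suppF in \<open>auto simp: supp_def\<close>)
      ultimately have sF: "sum x F = real_of_int (sum r V)" using xs by simp
      have stay: "y \<in> S" if "(u,y) \<in> (adj F)\<^sup>*" for y
        using that
      proof (induction rule: rtrancl_induct)
        case base then show ?case using uS .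
      next
        case (step y z)
        then have yz: "{y,z} \<in> F" unfolding adj_def by auto
        then show ?case
        proof (cases "{y,z} \<in> cedges S")
          case True
          then obtain c d where "{y,z} = {c,d}" "c \<in> S" "d \<in> S" unfolding cedges_def by auto
          then show ?thesis by (auto simp: doubleton_eq_iff)
        next
          case False
          then have "{y,z} \<in> cedges (V - S)" using yz unfolding F_def by auto
          then obtain c d where "{y,z} = {c,d}" "c \<in> V - S" "d \<in> V - S" unfolding cedges_def by auto
          then have "y \<notin> S" by (auto simp: doubleton_eq_iff)
          then show ?thesis using step by simp
        qed
      qed
      have ne: "(adj F)\<^sup>* `` {u} \<noteq> (adj F)\<^sup>* `` {v}"
      proof
        assume "(adj F)\<^sup>* `` {u} = (adj F)\<^sup>* `` {v}"
        moreover have "v \<in> (adj F)\<^sup>* `` {v}" by auto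
        ultimately have "(u,v) \<in> (adj F)\<^sup>*" by auto
        then show False using stay vS by auto
      qed
      have fin: "finite (V // (adj F)\<^sup>*)" unfolding quotient_def using assms by auto
      have "{(adj F)\<^sup>* `` {u}, (adj F)\<^sup>* `` {v}} \<subseteq> V // (adj F)\<^sup>*"
        using uv by (auto intro: quotientI)
      from card_mono[OF fin this] ne have "2 \<le> card (V // (adj F)\<^sup>*)" by simp
      then have "real (card (V // (adj F)\<^sup>*)) \<ge> 2" by simp
      moreover have "sum x F \<le> bfun V r F" using xb FE by auto
      ultimately show False using bform[OF assms(1) FE[unfolded E_def] Fne, of r] sF by simp
    qed
    then show "x \<in> {x \<in> nonneg_int_vecs E. sum x E = real_of_int (sum r V) \<and> connected_graph V (supp x E)}"
      using xv xi xs unfolding nonneg_int_vecs_def by auto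
  qed
qed

end
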